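(* Let $A,B\in\mathrm{SL}_2\mathbb{R}$ be noncommuting, with $\mathrm{tr}(A)=\mathrm{tr}(B)\ge2$, and assume that the pair $A,B$ is well oriented. Then the only optimal word is $ab$.
   Context: For a matrix $X$ of trace $\ge2$, $X\ne I$, its attracting/repelling fixed points in $\partial\mathcal{H}=\mathbb{P}^1\mathbb{R}$ (under the Möbius action) are denoted with $+$/$-$ superscripts ($\alpha^\pm$ for $A$, $\beta^\pm$ for $B$); if $X$ is parabolic both denote its unique fixed point. Coherent orientation: with $\partial\mathcal{H}$ cyclically ordered and $[\alpha,\beta]$ the closed counterclockwise interval from $\alpha$ to $\beta$, let $I^+=\{\alpha^+\}$ if $\alpha^+=\beta^+$, and otherwise the one of $[\alpha^+,\beta^+],[\beta^+,\alpha^+]$ mapped into itself by both $A$ and $B$ (if it exists); define $I^-$ likewise with $A^{-1},B^{-1},\alpha^-,\beta^-$; the pair $A,B$ is coherently oriented if both exist. The pair $A,B$ is well oriented if $A,B$ is coherently oriented but $A,B^{-1}$ is not. Words: $F_2^+$ is the free semigroup of nonempty words over $\{a,b\}$, $|w|$ the length, $\phi(a)=A,\phi(b)=B$, $[w]=\mathrm{tr}(\phi(w))$. Define $w\preceq u$ iff $[w^{|u|}]\le[u^{|w|}]$; $w$ is maximal if $u\preceq w$ for all $u$. A Lyndon word is one strictly smaller lexicographically ($a<b$) than each of its proper rotations. A complete set of optimal words is a set of pairwise distinct maximal Lyndon words such that every maximal word is a power of a rotation of one of them; it is unique if it exists, and its elements are the optimal words. *)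

theory Defs
  imports "HOL-Analysis.Analysis"
begin

type_synonym mat2 = "real^2^2"

text \<open>Points of the boundary P^1 R = R \<union> {\<infinity>}: Some x is the real x, None is \<infinity>.\<close>
type_synonym bpt = "real option"

definition pt_of_vec :: "real^2 \<Rightarrow> bpt" where
  "pt_of_vec v = (if v$2 = 0 then None else Some (v$1 / v$2))"

definition vec_of_pt :: "bpt \<Rightarrow> real^2" where
  "vec_of_pt p = (case p of None \<Rightarrow> vector [1, 0] | Some x \<Rightarrow> vector [x, 1])"

definition mob :: "mat2 \<Rightarrow> bpt \<Rightarrow> bpt" where
  "mob X p = pt_of_vec (X *v vec_of_pt p)"

definition lam_plus :: "mat2 \<Rightarrow> real" where
  "lam_plus X = (trace X + sqrt ((trace X)\<^sup>2 - 4)) / 2"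

definition lam_minus :: "mat2 \<Rightarrow> real" where
  "lam_minus X = (trace X - sqrt ((trace X)\<^sup>2 - 4)) / 2"

text \<open>Attracting fixed point: the eigenline of the larger eigenvalue;
  repelling fixed point: the eigenline of the smaller eigenvalue.
  For parabolic X both are its unique fixed point.\<close>
definition fix_plus :: "mat2 \<Rightarrow> bpt" where
  "fix_plus X = (THE p. \<exists>v. v \<noteq> 0 \<and> X *v v = lam_plus X *\<^sub>R v \<and> p = pt_of_vec v)"

definition fix_minus :: "mat2 \<Rightarrow> bpt" where
  "fix_minus X = (THE p. \<exists>v. v \<noteq> 0 \<and> X *v v = lam_minus X *\<^sub>R v \<and> p = pt_of_vec v)"

text \<open>Closed counterclockwise interval [\<alpha>,\<beta>] on the boundary of the upper half plane
  (counterclockwise = increasing real direction, passing through \<infinity>).\<close>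
definition ccw_interval :: "bpt \<Rightarrow> bpt \<Rightarrow> bpt set" where
  "ccw_interval \<alpha> \<beta> =
     (case (\<alpha>, \<beta>) of
        (None, None) \<Rightarrow> {None}
      | (None, Some y) \<Rightarrow> {None} \<union> Some ` {..y}
      | (Some x, None) \<Rightarrow> Some ` {x..} \<union> {None}
      | (Some x, Some y) \<Rightarrow>
          (if x \<le> y then Some ` {x..y} else Some ` {x..} \<union> {None} \<union> Some ` {..y}))"

definition maps_into :: "mat2 \<Rightarrow> bpt set \<Rightarrow> bool" where
  "maps_into X I \<longleftrightarrow> mob X ` I \<subseteq> I"

definition interval_exists :: "mat2 \<Rightarrow> mat2 \<Rightarrow> bpt \<Rightarrow> bpt \<Rightarrow> bool" where
  "interval_exists X Y p q \<longleftrightarrow>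
     p = q \<or>
     (maps_into X (ccw_interval p q) \<and> maps_into Y (ccw_interval p q)) \<or>
     (maps_into X (ccw_interval q p) \<and> maps_into Y (ccw_interval q p))"

definition coherently_oriented :: "mat2 \<Rightarrow> mat2 \<Rightarrow> bool" where
  "coherently_oriented A B \<longleftrightarrow>
     interval_exists A B (fix_plus A) (fix_plus B) \<and>
     interval_exists (matrix_inv A) (matrix_inv B) (fix_minus A) (fix_minus B)"

definition well_oriented :: "mat2 \<Rightarrow> mat2 \<Rightarrow> bool" where
  "well_oriented A B \<longleftrightarrow> coherently_oriented A B \<and> \<not> coherently_oriented A (matrix_inv B)"

datatype letter = La | Lb

definition phi :: "mat2 \<Rightarrow> mat2 \<Rightarrow> letter list \<Rightarrow> mat2" where
  "phi A B w = foldr (\<lambda>x M. (case x of La \<Rightarrow> A | Lb \<Rightarrow> B) ** M) w (mat 1)"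

definition wtr :: "mat2 \<Rightarrow> mat2 \<Rightarrow> letter list \<Rightarrow> real" where
  "wtr A B w = trace (phi A B w)"

definition wpow :: "letter list \<Rightarrow> nat \<Rightarrow> letter list" where
  "wpow w n = concat (replicate n w)"

definition wle :: "mat2 \<Rightarrow> mat2 \<Rightarrow> letter list \<Rightarrow> letter list \<Rightarrow> bool" where
  "wle A B w u \<longleftrightarrow> wtr A B (wpow w (length u)) \<le> wtr A B (wpow u (length w))"

definition maximal_word :: "mat2 \<Rightarrow> mat2 \<Rightarrow> letter list \<Rightarrow> bool" where
  "maximal_word A B w \<longleftrightarrow> w \<noteq> [] \<and> (\<forall>u. u \<noteq> [] \<longrightarrow> wle A B u w)"

definition letter_less :: "(letter \<times> letter) set" where
  "letter_less = {(La, Lb)}"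

definition lyndon :: "letter list \<Rightarrow> bool" where
  "lyndon w \<longleftrightarrow> w \<noteq> [] \<and>
     (\<forall>k. 0 < k \<and> k < length w \<longrightarrow> (w, rotate k w) \<in> lexord letter_less)"

definition complete_optimal_set :: "mat2 \<Rightarrow> mat2 \<Rightarrow> letter list set \<Rightarrow> bool" where
  "complete_optimal_set A B S \<longleftrightarrow>
     (\<forall>s\<in>S. maximal_word A B s \<and> lyndon s) \<and>
     (\<forall>w. maximal_word A B w \<longrightarrow>
        (\<exists>s\<in>S. \<exists>k n. n \<ge> 1 \<and> w = wpow (rotate k s) n))"

end

theory Submission
  imports Defs
begin

definition mk :: "real \<Rightarrow> real \<Rightarrow> real \<Rightarrow> real \<Rightarrow> real^2^2" where
  "mk a b c d = vector [vector [a, b], vector [c, d]]"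

lemma mk_nth[simp]: "mk a b c d $ 1 $ 1 = a" "mk a b c d $ 1 $ 2 = b"
  "mk a b c d $ 2 $ 1 = c" "mk a b c d $ 2 $ 2 = d"
  by (simp_all add: mk_def)

lemma mat_eq2: "(A::real^2^2) = B \<longleftrightarrow> A$1$1 = B$1$1 \<and> A$1$2 = B$1$2 \<and> A$2$1 = B$2$1 \<and> A$2$2 = B$2$2"
  by (auto simp: vec_eq_iff forall_2)

lemma vec_eq2: "(u::real^2) = v \<longleftrightarrow> u$1 = v$1 \<and> u$2 = v$2"
  by (auto simp: vec_eq_iff forall_2)

lemma mk_eta: "(A::real^2^2) = mk (A$1$1) (A$1$2) (A$2$1) (A$2$2)"
  by (simp add: mat_eq2)

lemma vec_eta: "(u::real^2) = vector [u$1, u$2]"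
  by (simp add: vec_eq2)

lemma mk_eq[simp]: "mk a b c d = mk a' b' c' d' \<longleftrightarrow> a = a' \<and> b = b' \<and> c = c' \<and> d = d'"
  by (simp add: mat_eq2)

lemma vector2_eq[simp]: "(vector [a, b] :: real^2) = vector [a', b'] \<longleftrightarrow> a = a' \<and> b = b'"
  by (simp add: vec_eq2)

lemma mk_mult[simp]: "mk a b c d ** mk e f g h = mk (a*e+b*g) (a*f+b*h) (c*e+d*g) (c*f+d*h)"
  by (simp add: mat_eq2 matrix_matrix_mult_def sum_2)

lemma mk_mv[simp]: "mk a b c d *v vector [x, y] = vector [a*x+b*y, c*x+d*y]"
  by (simp add: vec_eq2 matrix_vector_mult_def sum_2)

lemma mk_det[simp]: "det (mk a b c d) = a*d - b*c"
  by (simp add: det_2)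

lemma mk_trace[simp]: "trace (mk a b c d) = a + d"
  by (simp add: trace_def sum_2)

lemma mk_one: "(mat 1 :: real^2^2) = mk 1 0 0 1"
  by (simp add: mat_eq2 mat_def)

lemma mk_scale[simp]: "k *\<^sub>R mk a b c d = mk (k*a) (k*b) (k*c) (k*d)"
  by (simp add: mat_eq2)

lemma mk_add[simp]: "mk a b c d + mk a' b' c' d' = mk (a+a') (b+b') (c+c') (d+d')"
  by (simp add: mat_eq2)

lemma mk_uminus[simp]: "- mk a b c d = mk (-a) (-b) (-c) (-d)"
  by (simp add: mat_eq2)

lemma mk_transpose[simp]: "transpose (mk a b c d) = mk a c b d"
  by (simp add: mat_eq2 transpose_def)

lemma vec_scale[simp]: "k *\<^sub>R (vector [a, b] :: real^2) = vector [k*a, k*b]"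
  by (simp add: vec_eq2)

lemma vec_add[simp]: "(vector [a, b] :: real^2) + vector [c, d] = vector [a+c, b+d]"
  by (simp add: vec_eq2)

lemma vec_uminus[simp]: "- (vector [a, b] :: real^2) = vector [-a, -b]"
  by (simp add: vec_eq2)

lemma vec_zero: "(0::real^2) = vector [0, 0]"
  by (simp add: vec_eq2)

lemma inv_mk: assumes "a*d - b*c = 1" shows "matrix_inv (mk a b c d) = mk d (-b) (-c) a"
proof -
  let ?A = "mk a b c d" and ?N = "mk d (-b) (-c) a"
  have 1: "?A ** ?N = mat 1" "?N ** ?A = mat 1" using assms
    by (simp_all add: mk_one algebra_simps)
  show ?thesis unfolding matrix_inv_def
  proof (rule some_equality)
    show "?A ** ?N = mat 1 \<and> ?N ** ?A = mat 1" using 1 by simp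
  next
    fix A' assume h: "?A ** A' = mat 1 \<and> A' ** ?A = mat 1"
    have "A' = (?N ** ?A) ** A'" using 1 by (simp add: matrix_mul_lid)
    also have "\<dots> = ?N ** (?A ** A')" by (simp add: matrix_mul_assoc)
    also have "\<dots> = ?N" using h by (simp add: matrix_mul_rid)
    finally show "A' = ?N" .
  qed
qed


lemma matrix_vector_mult_scaleR2: "(X::real^2^2) *v (k *\<^sub>R v) = k *\<^sub>R (X *v v)"
proof -
  obtain a b c d where X: "X = mk a b c d" using mk_eta by blast
  obtain p q where w: "v = vector [p,q]" using vec_eta by blast
  show ?thesis unfolding X w by (simp add: algebra_simps)
qed

definition det2 :: "real^2 \<Rightarrow> real^2 \<Rightarrow> real" where
  "det2 u v = u$1 * v$2 - u$2 * v$1"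

lemma det2_vec[simp]: "det2 (vector [a,b]) (vector [c,d]) = a*d - b*c"
  by (simp add: det2_def)

lemma vec_of_pt_simps[simp]: "vec_of_pt None = vector [1,0]" "vec_of_pt (Some x) = vector [x,1]"
  by (simp_all add: vec_of_pt_def)

lemma pt_of_vec_vec[simp]: "pt_of_vec (vector [a,b]) = (if b = 0 then None else Some (a/b))"
  by (simp add: pt_of_vec_def)

lemma vec_of_pt_nz: "vec_of_pt p \<noteq> 0"
  by (cases p) (simp_all add: vec_zero)

lemma pt_vec_pt[simp]: "pt_of_vec (vec_of_pt p) = p"
  by (cases p) simp_all

lemma vec_pt_scale: assumes "w \<noteq> 0" shows "\<exists>k. k \<noteq> 0 \<and> vec_of_pt (pt_of_vec w) = k *\<^sub>R w"
proof -
  obtain a b where w: "w = vector [a,b]" using vec_eta by blast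
  show ?thesis
  proof (cases "b = 0")
    case True
    then have "a \<noteq> 0" using assms w by (auto simp: vec_zero)
    then show ?thesis using True w by (intro exI[of _ "1/a"]) auto
  next
    case False
    then show ?thesis using w by (intro exI[of _ "1/b"]) auto
  qed
qed

lemma pt_scale: assumes "k \<noteq> 0" shows "pt_of_vec (k *\<^sub>R w) = pt_of_vec w"
proof -
  obtain a b where w: "w = vector [a,b]" using vec_eta by blast
  show ?thesis using assms by (simp add: w)
qed

lemma pt_eq_iff: assumes "u \<noteq> 0" "v \<noteq> 0" shows "pt_of_vec u = pt_of_vec v \<longleftrightarrow> det2 u v = 0"
proof -
  obtain a b where u: "u = vector [a,b]" using vec_eta by blast
  obtain c d where v: "v = vector [c,d]" using vec_eta by blast
  have ab: "a \<noteq> 0 \<or> b \<noteq> 0" and cd: "c \<noteq> 0 \<or> d \<noteq> 0" using assms u v by (auto simp: vec_zero)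
  show ?thesis unfolding u v using ab cd
    by (auto simp: field_simps)
qed

lemma det2_scale[simp]: "det2 (k *\<^sub>R u) v = k * det2 u v" "det2 u (k *\<^sub>R v) = k * det2 u v"
  by (simp_all add: det2_def algebra_simps)

lemma det2_add[simp]: "det2 (u + w) v = det2 u v + det2 w v" "det2 u (v + w) = det2 u v + det2 u w"
  by (simp_all add: det2_def algebra_simps)

lemma det2_self[simp]: "det2 u u = 0"
  by (simp add: det2_def)

lemma det2_swap: "det2 v u = - det2 u v"
  by (simp add: det2_def)

lemma det2_nz: "det2 u v \<noteq> 0 \<Longrightarrow> u \<noteq> 0 \<and> v \<noteq> 0"
  by (auto simp: det2_def)

lemma mob_pt: assumes "det X \<noteq> 0" "w \<noteq> 0"
  shows "mob X (pt_of_vec w) = pt_of_vec (X *v w)"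
proof -
  obtain k where k: "k \<noteq> 0" "vec_of_pt (pt_of_vec w) = k *\<^sub>R w" using vec_pt_scale assms by blast
  show ?thesis unfolding mob_def k(2) matrix_vector_mult_scaleR2 using pt_scale k by simp
qed

lemma mv_nz: fixes X :: "real^2^2" assumes "det X \<noteq> 0" "w \<noteq> 0" shows "X *v w \<noteq> 0"
proof -
  obtain a b c d where X: "X = mk a b c d" using mk_eta by blast
  obtain p q where w: "w = vector [p,q]" using vec_eta by blast
  show ?thesis
  proof
    assume "X *v w = 0"
    then have e: "a*p + b*q = 0" "c*p + d*q = 0" unfolding X w by (auto simp: vec_zero)
    have "(a*d - b*c)*p = d*(a*p + b*q) - b*(c*p + d*q)" by (simp add: algebra_simps)
    then have "(a*d - b*c)*p = 0" using e by simp
    moreover have "(a*d - b*c)*q = a*(c*p + d*q) - c*(a*p + b*q)" by (simp add: algebra_simps)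
    then have "(a*d - b*c)*q = 0" using e by simp
    moreover have "a*d - b*c \<noteq> 0" using assms(1) unfolding X by simp
    ultimately have "p = 0" "q = 0" by auto
    then show False using assms(2) unfolding w by (simp add: vec_zero)
  qed
qed

lemma K0: assumes "p \<noteq> q"
  shows "z \<in> ccw_interval p q \<longleftrightarrow>
    det2 (vec_of_pt p) (vec_of_pt q) * det2 (vec_of_pt p) (vec_of_pt z) * det2 (vec_of_pt z) (vec_of_pt q) \<le> 0"
proof (cases p)
  case None
  then obtain y where q: "q = Some y" using assms by (cases q) auto
  show ?thesis using None q
    by (cases z) (auto simp: ccw_interval_def)
next
  case (Some x)
  show ?thesis
  proof (cases q)
    case None
    then show ?thesis using Some by (cases z) (auto simp: ccw_interval_def)
  next
    case (Some y)
    with \<open>p = Some x\<close> assms have "x \<noteq> y" by auto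
    show ?thesis using \<open>p = Some x\<close> Some \<open>x \<noteq> y\<close>
      by (cases z) (auto simp: ccw_interval_def mult_le_0_iff zero_le_mult_iff)
  qed
qed

lemma pos_mult_le0: "(0::real) < c \<Longrightarrow> c * y \<le> 0 \<longleftrightarrow> y \<le> 0"
  by (simp add: mult_le_0_iff)

lemma K1: assumes D: "det2 u v \<noteq> 0"
  shows "z \<in> ccw_interval (pt_of_vec u) (pt_of_vec v) \<longleftrightarrow>
     det2 u v * (det2 u (vec_of_pt z) * det2 (vec_of_pt z) v) \<le> 0"
proof -
  have nz: "u \<noteq> 0" "v \<noteq> 0" using det2_nz[OF D] by auto
  have ne: "pt_of_vec u \<noteq> pt_of_vec v" using pt_eq_iff[OF nz] D by simp
  obtain s where s: "s \<noteq> 0" "vec_of_pt (pt_of_vec u) = s *\<^sub>R u" using vec_pt_scale nz by blast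
  obtain r where r: "r \<noteq> 0" "vec_of_pt (pt_of_vec v) = r *\<^sub>R v" using vec_pt_scale nz by blast
  have pos: "s * s * (r * r) > 0" using s(1) r(1) by (metis mult_pos_pos not_real_square_gt_zero)
  have "z \<in> ccw_interval (pt_of_vec u) (pt_of_vec v) \<longleftrightarrow>
     (s * s * (r * r)) * (det2 u v * (det2 u (vec_of_pt z) * det2 (vec_of_pt z) v)) \<le> 0"
    unfolding K0[OF ne] s r by (simp add: algebra_simps)
  also have "\<dots> \<longleftrightarrow> det2 u v * (det2 u (vec_of_pt z) * det2 (vec_of_pt z) v) \<le> 0"
    using pos_mult_le0[OF pos] by blast
  finally show ?thesis .
qed

lemma decomp: "det2 u v *\<^sub>R w = det2 w v *\<^sub>R u + det2 u w *\<^sub>R v"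
  by (simp add: det2_def vec_eq2 algebra_simps)

lemma mv_add: "(X::real^2^2) *v (u + v) = X *v u + X *v v"
  by (simp add: matrix_vector_right_distrib)

definition Psi :: "real^2 \<Rightarrow> real^2 \<Rightarrow> real^2 \<Rightarrow> real" where
  "Psi u v w = det2 u w * det2 w v"

lemma Psi_scale: "Psi u v (k *\<^sub>R w) = (k*k) * Psi u v w"
  by (simp add: Psi_def algebra_simps)

lemma interval_Psi: assumes D: "det2 u v \<noteq> 0"
  defines "I \<equiv> (if det2 u v < 0 then ccw_interval (pt_of_vec u) (pt_of_vec v) else ccw_interval (pt_of_vec v) (pt_of_vec u))"
  shows "z \<in> I \<longleftrightarrow> Psi u v (vec_of_pt z) \<ge> 0"
proof (cases "det2 u v < 0")
  case True
  then show ?thesis unfolding I_def Psi_def using K1[OF D] by (simp add: mult_le_0_iff zero_le_mult_iff)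
next
  case False
  then have "det2 v u < 0" using D det2_swap[of v u] by linarith
  then have D': "det2 v u \<noteq> 0" by simp
  show ?thesis unfolding I_def Psi_def using False K1[OF D', of z] \<open>det2 v u < 0\<close>
    by (simp add: mult_le_0_iff zero_le_mult_iff det2_swap[of v] det2_swap[of _ u]; blast)
qed

lemma maps_Psi:
  fixes X :: "real^2^2"
  assumes D: "det2 u v \<noteq> 0" and dX: "det X \<noteq> 0"
    and inv: "\<And>w. Psi u v w \<ge> 0 \<Longrightarrow> Psi u v (X *v w) \<ge> 0"
  defines "I \<equiv> (if det2 u v < 0 then ccw_interval (pt_of_vec u) (pt_of_vec v) else ccw_interval (pt_of_vec v) (pt_of_vec u))"
  shows "maps_into X I"
  unfolding maps_into_def
proof
  fix y assume "y \<in> mob X ` I"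
  then obtain z where z: "z \<in> I" "y = mob X z" by blast
  have "Psi u v (vec_of_pt z) \<ge> 0" using z(1) interval_Psi[OF D] unfolding I_def by blast
  then have h: "Psi u v (X *v vec_of_pt z) \<ge> 0" using inv by blast
  have nz: "X *v vec_of_pt z \<noteq> 0" using mv_nz[OF dX vec_of_pt_nz] .
  have y: "y = pt_of_vec (X *v vec_of_pt z)" using z(2) mob_pt[OF dX vec_of_pt_nz, of z] by simp
  obtain k where k: "k \<noteq> 0" "vec_of_pt y = k *\<^sub>R (X *v vec_of_pt z)" using vec_pt_scale[OF nz] y by blast
  have "Psi u v (vec_of_pt y) \<ge> 0" unfolding k Psi_scale using h by simp
  then show "y \<in> I" using interval_Psi[OF D] unfolding I_def by blast
qed

lemma cone_inv:
  fixes X Y :: "real^2^2"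
  assumes D: "det2 u v \<noteq> 0" and dX: "det X \<noteq> 0" and dY: "det Y \<noteq> 0"
    and Xu: "X *v u = m *\<^sub>R u" and Xv: "X *v v = d1 *\<^sub>R u + d2 *\<^sub>R v"
    and Yu: "Y *v u = c1 *\<^sub>R u + c2 *\<^sub>R v" and Yv: "Y *v v = m *\<^sub>R v"
    and nn: "m \<ge> 0" "d1 \<ge> 0" "d2 \<ge> 0" "c1 \<ge> 0" "c2 \<ge> 0"
  shows "interval_exists X Y (pt_of_vec u) (pt_of_vec v)"
proof -
  define I where "I \<equiv> (if det2 u v < 0 then ccw_interval (pt_of_vec u) (pt_of_vec v) else ccw_interval (pt_of_vec v) (pt_of_vec u))"
  let ?D = "det2 u v"
  have invX: "Psi u v (X *v w) \<ge> 0" if h: "Psi u v w \<ge> 0" for w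
  proof -
    let ?a = "det2 w v" and ?b = "det2 u w"
    have "?D *\<^sub>R (X *v w) = X *v (?D *\<^sub>R w)" by (simp add: matrix_vector_mult_scaleR2)
    also have "\<dots> = (?a*m + ?b*d1) *\<^sub>R u + (?b*d2) *\<^sub>R v"
      unfolding decomp[of u v w] mv_add matrix_vector_mult_scaleR2 Xu Xv by (simp add: scaleR_add_right scaleR_add_left)
    finally have e: "?D *\<^sub>R (X *v w) = (?a*m + ?b*d1) *\<^sub>R u + (?b*d2) *\<^sub>R v" .
    have e1: "?D * det2 u (X *v w) = ?b*d2 * ?D" using arg_cong[OF e, of "det2 u"] by simp
    have e2: "?D * det2 (X *v w) v = (?a*m + ?b*d1) * ?D" using arg_cong[OF e, of "\<lambda>z. det2 z v"] by simp
    have f1: "det2 u (X *v w) = ?b*d2" using e1 D by simp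
    have f2: "det2 (X *v w) v = ?a*m + ?b*d1" using e2 D by simp
    have ab: "?b * ?a \<ge> 0" using h by (simp add: Psi_def)
    have "Psi u v (X *v w) = (?b*d2) * (?a*m + ?b*d1)" unfolding Psi_def f1 f2 ..
    also have "\<dots> = (d2*m)*(?b * ?a) + (d2*d1)*(?b * ?b)" by (simp add: algebra_simps)
    finally have "Psi u v (X *v w) = (d2*m)*(?b * ?a) + (d2*d1)*(?b * ?b)" .
    moreover have "(d2*m)*(?b * ?a) \<ge> 0" by (rule mult_nonneg_nonneg) (simp_all add: nn ab)
    moreover have "(d2*d1)*(?b * ?b) \<ge> 0" by (rule mult_nonneg_nonneg) (simp_all add: nn)
    ultimately show ?thesis by linarith
  qed
  have invY: "Psi u v (Y *v w) \<ge> 0" if h: "Psi u v w \<ge> 0" for w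
  proof -
    let ?a = "det2 w v" and ?b = "det2 u w"
    have "?D *\<^sub>R (Y *v w) = Y *v (?D *\<^sub>R w)" by (simp add: matrix_vector_mult_scaleR2)
    also have "\<dots> = (?a*c1) *\<^sub>R u + (?a*c2 + ?b*m) *\<^sub>R v"
      unfolding decomp[of u v w] mv_add matrix_vector_mult_scaleR2 Yu Yv by (simp add: scaleR_add_right scaleR_add_left)
    finally have e: "?D *\<^sub>R (Y *v w) = (?a*c1) *\<^sub>R u + (?a*c2 + ?b*m) *\<^sub>R v" .
    have e1: "?D * det2 u (Y *v w) = (?a*c2 + ?b*m) * ?D" using arg_cong[OF e, of "det2 u"] by simp
    have e2: "?D * det2 (Y *v w) v = (?a*c1) * ?D" using arg_cong[OF e, of "\<lambda>z. det2 z v"] by simp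
    have f1: "det2 u (Y *v w) = ?a*c2 + ?b*m" using e1 D by simp
    have f2: "det2 (Y *v w) v = ?a*c1" using e2 D by simp
    have ab: "?b * ?a \<ge> 0" using h by (simp add: Psi_def)
    have "Psi u v (Y *v w) = (?a*c2 + ?b*m) * (?a*c1)" unfolding Psi_def f1 f2 ..
    also have "\<dots> = (c1*m)*(?b * ?a) + (c1*c2)*(?a * ?a)" by (simp add: algebra_simps)
    finally have "Psi u v (Y *v w) = (c1*m)*(?b * ?a) + (c1*c2)*(?a * ?a)" .
    moreover have "(c1*m)*(?b * ?a) \<ge> 0" by (rule mult_nonneg_nonneg) (simp_all add: nn ab)
    moreover have "(c1*c2)*(?a * ?a) \<ge> 0" by (rule mult_nonneg_nonneg) (simp_all add: nn)
    ultimately show ?thesis by linarith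
  qed
  have "maps_into X I" unfolding I_def by (rule maps_Psi[OF D dX invX])
  moreover have "maps_into Y I" unfolding I_def by (rule maps_Psi[OF D dY invY])
  ultimately have MM: "maps_into X I \<and> maps_into Y I" by blast
  show ?thesis
  proof (cases "det2 u v < 0")
    case True
    then have "I = ccw_interval (pt_of_vec u) (pt_of_vec v)" unfolding I_def by simp
    then show ?thesis using MM unfolding interval_exists_def by simp
  next
    case False
    then have "I = ccw_interval (pt_of_vec v) (pt_of_vec u)" unfolding I_def by simp
    then show ?thesis using MM unfolding interval_exists_def by simp
  qed
qed

lemma mk_mat: "(mat k :: real^2^2) = mk k 0 0 k"
  by (simp add: mat_eq2 mat_def)

lemma det2_mv: "det2 ((X::real^2^2) *v u) (X *v v) = det X * det2 u v"
proof -
  obtain a b c d where X: "X = mk a b c d" using mk_eta by blast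
  obtain p q where u: "u = vector [p,q]" using vec_eta by blast
  obtain r s where v: "v = vector [r,s]" using vec_eta by blast
  show ?thesis unfolding X u v by (simp add: algebra_simps)
qed

lemma trace_det2: "trace (Z::real^2^2) * det2 u v = det2 (Z *v u) v + det2 u (Z *v v)"
proof -
  obtain a b c d where X: "Z = mk a b c d" using mk_eta by blast
  obtain p q where u: "u = vector [p,q]" using vec_eta by blast
  obtain r s where v: "v = vector [r,s]" using vec_eta by blast
  show ?thesis unfolding X u v by (simp add: algebra_simps)
qed

lemma coords: assumes "det2 u v \<noteq> 0"
  shows "w = (det2 w v / det2 u v) *\<^sub>R u + (det2 u w / det2 u v) *\<^sub>R v"
proof -
  have "w = (1 / det2 u v) *\<^sub>R (det2 u v *\<^sub>R w)" using assms by simp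
  also have "\<dots> = (det2 w v / det2 u v) *\<^sub>R u + (det2 u w / det2 u v) *\<^sub>R v"
    unfolding decomp[of u v w] by (simp add: scaleR_add_right)
  finally show ?thesis .
qed

lemma G:
  fixes X Y :: "real^2^2"
  assumes dX: "det X = 1" and dY: "det Y = 1" and nz: "u \<noteq> 0" "v \<noteq> 0"
    and Xu: "X *v u = m *\<^sub>R u" and Yv: "Y *v v = m *\<^sub>R v" and m: "m > 0"
    and tr: "trace (X ** Y) \<ge> 2"
  shows "interval_exists X Y (pt_of_vec u) (pt_of_vec v)"
proof (cases "det2 u v = 0")
  case True
  then show ?thesis using pt_eq_iff[OF nz] by (simp add: interval_exists_def)
next
  case False
  let ?D = "det2 u v"
  define d1 where "d1 = det2 (X *v v) v / ?D"
  define d2 where "d2 = det2 u (X *v v) / ?D"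
  define c1 where "c1 = det2 (Y *v u) v / ?D"
  define c2 where "c2 = det2 u (Y *v u) / ?D"
  have Xv: "X *v v = d1 *\<^sub>R u + d2 *\<^sub>R v" unfolding d1_def d2_def using coords[OF False] .
  have Yu: "Y *v u = c1 *\<^sub>R u + c2 *\<^sub>R v" unfolding c1_def c2_def using coords[OF False] .
  have "m * d2 * ?D = ?D" using det2_mv[of X u v] dX unfolding Xu Xv by (simp add: algebra_simps)
  then have md2: "m * d2 = 1" using False by simp
  have "c1 * m * ?D = ?D" using det2_mv[of Y u v] dY unfolding Yv Yu by (simp add: algebra_simps)
  then have mc1: "c1 * m = 1" using False by simp
  have Zu: "(X ** Y) *v u = (c1*m + c2*d1) *\<^sub>R u + (c2*d2) *\<^sub>R v"
    unfolding matrix_vector_mul_assoc[symmetric] Yu mv_add matrix_vector_mult_scaleR2 Xu Xv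
    by (simp add: algebra_simps)
  have Zv: "(X ** Y) *v v = (m*d1) *\<^sub>R u + (m*d2) *\<^sub>R v"
    unfolding matrix_vector_mul_assoc[symmetric] Yv matrix_vector_mult_scaleR2 Xv
    by (simp add: algebra_simps)
  have "trace (X ** Y) * ?D = (c1*m + c2*d1 + m*d2) * ?D"
    unfolding trace_det2 Zu Zv by (simp add: algebra_simps det2_swap[of v u])
  then have "trace (X ** Y) = c1*m + c2*d1 + m*d2" using False by simp
  then have cd: "c2 * d1 \<ge> 0" using tr md2 mc1 by linarith
  have d2p: "d2 \<ge> 0" using md2 m by (metis less_eq_real_def mult_le_0_iff zero_less_one not_less)
  have c1p: "c1 \<ge> 0" using mc1 m by (metis less_eq_real_def mult_le_0_iff zero_less_one not_less)
  have dX0: "det X \<noteq> 0" "det Y \<noteq> 0" using dX dY by auto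
  show ?thesis
  proof (cases "d1 \<ge> 0 \<and> c2 \<ge> 0")
    case True
    then show ?thesis using cone_inv[OF False dX0 Xu Xv Yu Yv] m d2p c1p by simp
  next
    case F2: False
    then have "d1 \<le> 0" "c2 \<le> 0" using cd by (auto simp: zero_le_mult_iff)
    have D': "det2 (-u) v \<noteq> 0" using False by (simp add: det2_def)
    have Xu': "X *v (-u) = m *\<^sub>R (-u)" using Xu matrix_vector_mult_scaleR2[of X "-1" u] by simp
    have Xv': "X *v v = (-d1) *\<^sub>R (-u) + d2 *\<^sub>R v" using Xv by simp
    have Yu': "Y *v (-u) = c1 *\<^sub>R (-u) + (-c2) *\<^sub>R v"
      using Yu matrix_vector_mult_scaleR2[of Y "-1" u] by simp
    have "interval_exists X Y (pt_of_vec (-u)) (pt_of_vec v)"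
      using cone_inv[OF D' dX0 Xu' Xv' Yu' Yv] m d2p c1p \<open>d1 \<le> 0\<close> \<open>c2 \<le> 0\<close> by simp
    moreover have "pt_of_vec (-u) = pt_of_vec u" using pt_scale[of "-1" u] by simp
    ultimately show ?thesis by simp
  qed
qed

lemma eig_ex:
  fixes X :: "real^2^2"
  assumes "det X = 1" "l*l - trace X * l + 1 = 0" "\<forall>k. X \<noteq> mat k"
  shows "\<exists>v. v \<noteq> 0 \<and> X *v v = l *\<^sub>R v"
proof -
  obtain a b c d where X: "X = mk a b c d" using mk_eta by blast
  have h: "(a - l)*(d - l) - b*c = 0" using assms(1,2) unfolding X by (simp add: algebra_simps)
  show ?thesis
  proof (cases "a - l = 0 \<and> b = 0")
    case True
    have "c \<noteq> 0 \<or> d \<noteq> l" using True assms(3) unfolding X mk_mat by auto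
    then show ?thesis using True h unfolding X
      by (intro exI[of _ "vector [d - l, -c]"]) (auto simp: vec_zero algebra_simps)
  next
    case False
    then show ?thesis using h unfolding X
      by (intro exI[of _ "vector [-b, a - l]"]) (auto simp: vec_zero algebra_simps)
  qed
qed

lemma eig_par:
  fixes X :: "real^2^2"
  assumes "\<forall>k. X \<noteq> mat k" "X *v v = l *\<^sub>R v" "X *v w = l *\<^sub>R w"
  shows "det2 v w = 0"
proof -
  obtain a b c d where X: "X = mk a b c d" using mk_eta by blast
  obtain p q where v: "v = vector [p,q]" using vec_eta by blast
  obtain r s where w: "w = vector [r,s]" using vec_eta by blast
  have e: "a*p + b*q = l*p" "c*p + d*q = l*q" "a*r + b * s = l * r" "c*r + d * s = l * s"
    using assms(2,3) unfolding X v w by auto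
  have ns: "a - l \<noteq> 0 \<or> b \<noteq> 0 \<or> c \<noteq> 0 \<or> d - l \<noteq> 0" using assms(1) unfolding X mk_mat by auto
  have f1: "(a - l)*p = -(b*q)" "(a - l)*r = -(b * s)" "(d - l)*q = -(c*p)" "(d - l) * s = -(c*r)"
    using e by (simp_all add: algebra_simps)
  have 1: "(a - l) * (p * s - q * r) = 0"
  proof -
    have "(a - l) * (p * s - q * r) = ((a - l)*p) * s - ((a - l)*r)*q" by (simp add: algebra_simps)
    then show ?thesis unfolding f1 by simp
  qed
  have 2: "b * (p * s - q * r) = 0"
  proof -
    have "b * (p * s - q * r) = - (((a - l)*r)*p) + (((a - l)*p)*r)" unfolding f1 by (simp add: algebra_simps)
    then show ?thesis by (simp add: algebra_simps)
  qed
  have 3: "c * (p * s - q * r) = 0"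
  proof -
    have "c * (p * s - q * r) = - (((d - l)*q) * s) + (((d - l) * s)*q)" unfolding f1 by (simp add: algebra_simps)
    then show ?thesis by (simp add: algebra_simps)
  qed
  have 4: "(d - l) * (p * s - q * r) = 0"
  proof -
    have "(d - l) * (p * s - q * r) = ((d - l) * s)*p - ((d - l)*q)*r" by (simp add: algebra_simps)
    then show ?thesis unfolding f1 by (simp add: algebra_simps)
  qed
  show ?thesis unfolding v w using ns 1 2 3 4 by auto
qed

lemma sqrt_facts: assumes "t \<ge> (2::real)"
  shows "sqrt (t^2 - 4) ^ 2 = t^2 - 4" "sqrt (t^2 - 4) \<ge> 0" "sqrt (t^2 - 4) < t"
proof -
  have "0 \<le> (t-2)*(t+2)" using assms by simp
  moreover have "t^2 - 4 = (t-2)*(t+2)" by (simp add: algebra_simps power2_eq_square)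
  ultimately have h: "t^2 - 4 \<ge> 0" by linarith
  show 1: "sqrt (t^2 - 4) ^ 2 = t^2 - 4" by (rule real_sqrt_pow2[OF h])
  show "sqrt (t^2 - 4) \<ge> 0" using h by simp
  have "sqrt (t^2 - 4) < sqrt (t^2)" using h by (intro real_sqrt_less_mono) simp
  then show "sqrt (t^2 - 4) < t" using assms by simp
qed

lemma lam_facts:
  fixes X :: "real^2^2" assumes "trace X \<ge> 2"
  shows "lam_plus X * lam_plus X - trace X * lam_plus X + 1 = 0"
    "lam_minus X * lam_minus X - trace X * lam_minus X + 1 = 0"
    "lam_plus X * lam_minus X = 1" "lam_minus X > 0" "lam_plus X > 0"
proof -
  define t where "t = trace X"
  define r where "r = sqrt (t^2 - 4)"
  have s2: "r^2 = t^2 - 4" and s0: "r \<ge> 0" and st: "r < t" using sqrt_facts[of t] assms unfolding r_def t_def by auto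
  have lp: "lam_plus X = (t + r)/2" and lm: "lam_minus X = (t - r)/2" unfolding lam_plus_def lam_minus_def r_def t_def by auto
  have e: "r*r = t*t - 4" using s2 by (simp add: power2_eq_square)
  show "lam_plus X * lam_plus X - trace X * lam_plus X + 1 = 0" unfolding lp t_def[symmetric]
  proof -
    have "(t + r) / 2 * ((t + r) / 2) - t * ((t + r) / 2) + 1 = (r*r - t*t + 4)/4" by (simp add: field_simps power2_eq_square)
    then show "(t + r) / 2 * ((t + r) / 2) - t * ((t + r) / 2) + 1 = 0" using e by simp
  qed
  show "lam_minus X * lam_minus X - trace X * lam_minus X + 1 = 0" unfolding lm t_def[symmetric]
  proof -
    have "(t - r) / 2 * ((t - r) / 2) - t * ((t - r) / 2) + 1 = (r*r - t*t + 4)/4" by (simp add: field_simps power2_eq_square)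
    then show "(t - r) / 2 * ((t - r) / 2) - t * ((t - r) / 2) + 1 = 0" using e by simp
  qed
  show "lam_plus X * lam_minus X = 1" unfolding lp lm
  proof -
    have "(t + r) / 2 * ((t - r) / 2) = (t*t - r*r)/4" by (simp add: field_simps)
    then show "(t + r) / 2 * ((t - r) / 2) = 1" using e by simp
  qed
  show "lam_minus X > 0" unfolding lm using st by simp
  show "lam_plus X > 0" unfolding lp using st s0 by simp
qed

lemma fix_eq:
  fixes X :: "real^2^2"
  assumes "\<forall>k. X \<noteq> mat k" "v \<noteq> 0" "X *v v = l *\<^sub>R v"
  shows "(THE p. \<exists>v. v \<noteq> 0 \<and> X *v v = l *\<^sub>R v \<and> p = pt_of_vec v) = pt_of_vec v"
proof (rule the_equality)
  show "\<exists>v'. v' \<noteq> 0 \<and> X *v v' = l *\<^sub>R v' \<and> pt_of_vec v = pt_of_vec v'" using assms by blast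
next
  fix p assume "\<exists>v'. v' \<noteq> 0 \<and> X *v v' = l *\<^sub>R v' \<and> p = pt_of_vec v'"
  then obtain w where w: "w \<noteq> 0" "X *v w = l *\<^sub>R w" "p = pt_of_vec w" by blast
  have "det2 w v = 0" using eig_par[OF assms(1) w(2) assms(3)] .
  then show "p = pt_of_vec v" using pt_eq_iff[OF w(1) assms(2)] w(3) by simp
qed

lemma inv_mk_gen: fixes A :: "real^2^2" assumes "det A = 1"
  shows "matrix_inv A = mk (A$2$2) (-A$1$2) (-A$2$1) (A$1$1)"
proof -
  have "A = mk (A$1$1) (A$1$2) (A$2$1) (A$2$2)" by (rule mk_eta)
  then show ?thesis using inv_mk[of "A$1$1" "A$2$2" "A$1$2" "A$2$1"] assms by (metis mk_det)
qed

lemma inv_eig: fixes A :: "real^2^2"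
  assumes "det A = 1" "A *v u = l *\<^sub>R u" "l \<noteq> 0"
  shows "matrix_inv A *v u = (1/l) *\<^sub>R u"
proof -
  obtain a b c d where X: "A = mk a b c d" using mk_eta by blast
  obtain p q where v: "u = vector [p,q]" using vec_eta by blast
  have e: "a*p + b*q = l*p" "c*p + d*q = l*q" "a*d - b*c = 1" using assms(1,2) unfolding X v by auto
  have 1: "l*(d*p - b*q) = p"
  proof -
    have "l*(d*p - b*q) = d*(l*p) - b*(l*q)" by (simp add: algebra_simps)
    also have "\<dots> = d*(a*p + b*q) - b*(c*p + d*q)" using e by simp
    also have "\<dots> = (a*d - b*c)*p" by (simp add: algebra_simps)
    finally show ?thesis using e(3) by simp
  qed
  have 2: "l*(-c*p + a*q) = q"
  proof -
    have "l*(-c*p + a*q) = -c*(l*p) + a*(l*q)" by (simp add: algebra_simps)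
    also have "\<dots> = -c*(a*p + b*q) + a*(c*p + d*q)" using e by simp
    also have "\<dots> = (a*d - b*c)*q" by (simp add: algebra_simps)
    finally show ?thesis using e(3) by simp
  qed
  have i: "matrix_inv A = mk d (-b) (-c) a" using inv_mk e(3) unfolding X by simp
  show ?thesis unfolding i v using 1 2 assms(3) by (simp add: field_simps)
qed

lemma coh_of_tr:
  fixes A C :: "real^2^2"
  assumes dA: "det A = 1" and dC: "det C = 1" and tAC: "trace A = trace C" and t2: "trace A \<ge> 2"
    and nsA: "\<forall>k. A \<noteq> mat k" and nsC: "\<forall>k. C \<noteq> mat k" and tr: "trace (A ** C) \<ge> 2"
  shows "coherently_oriented A C"
proof -
  have t2C: "trace C \<ge> 2" using t2 tAC by simp
  have lp: "lam_plus C = lam_plus A" "lam_minus C = lam_minus A"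
    using tAC by (simp_all add: lam_plus_def lam_minus_def)
  obtain u where u: "u \<noteq> 0" "A *v u = lam_plus A *\<^sub>R u" using eig_ex[OF dA lam_facts(1)[OF t2] nsA] by blast
  obtain v where v: "v \<noteq> 0" "C *v v = lam_plus A *\<^sub>R v"
    using eig_ex[OF dC lam_facts(1)[OF t2C] nsC] lp by auto
  obtain u' where u': "u' \<noteq> 0" "A *v u' = lam_minus A *\<^sub>R u'" using eig_ex[OF dA lam_facts(2)[OF t2] nsA] by blast
  obtain v' where v': "v' \<noteq> 0" "C *v v' = lam_minus A *\<^sub>R v'"
    using eig_ex[OF dC lam_facts(2)[OF t2C] nsC] lp by auto
  have fpA: "fix_plus A = pt_of_vec u" unfolding fix_plus_def using fix_eq[OF nsA u] .
  have fpC: "fix_plus C = pt_of_vec v" unfolding fix_plus_def using fix_eq[OF nsC v] lp by simp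
  have fmA: "fix_minus A = pt_of_vec u'" unfolding fix_minus_def using fix_eq[OF nsA u'] .
  have fmC: "fix_minus C = pt_of_vec v'" unfolding fix_minus_def using fix_eq[OF nsC v'] lp by simp
  have I1: "interval_exists A C (fix_plus A) (fix_plus C)"
    unfolding fpA fpC by (rule G[OF dA dC u(1) v(1) u(2) v(2) lam_facts(5)[OF t2] tr])
  have lm: "lam_minus A > 0" using lam_facts(4)[OF t2] .
  have iA: "matrix_inv A = mk (A$2$2) (-A$1$2) (-A$2$1) (A$1$1)" using inv_mk_gen[OF dA] .
  have iC: "matrix_inv C = mk (C$2$2) (-C$1$2) (-C$2$1) (C$1$1)" using inv_mk_gen[OF dC] .
  have diA: "det (matrix_inv A) = 1" using dA unfolding iA by (simp add: det_2 algebra_simps)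
  have diC: "det (matrix_inv C) = 1" using dC unfolding iC by (simp add: det_2 algebra_simps)
  have tri: "trace (matrix_inv A ** matrix_inv C) = trace (A ** C)"
    unfolding iA iC by (simp add: trace_def sum_2 matrix_matrix_mult_def algebra_simps)
  have I2: "interval_exists (matrix_inv A) (matrix_inv C) (fix_minus A) (fix_minus C)"
    unfolding fmA fmC
    by (rule G[OF diA diC u'(1) v'(1) inv_eig[OF dA u'(2)] inv_eig[OF dC v'(2)]])
       (use lm tr tri in auto)
  show ?thesis unfolding coherently_oriented_def using I1 I2 by simp
qed

lemma wo_trace:
  fixes A B :: "real^2^2"
  assumes dA: "det A = 1" and dB: "det B = 1" and nc: "A ** B \<noteq> B ** A"
    and tAB: "trace A = trace B" and t2: "trace A \<ge> 2" and wo: "well_oriented A B"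
  shows "trace (A ** B) > (trace A)^2 - 2"
proof -
  obtain a b c d where A: "A = mk a b c d" using mk_eta by blast
  obtain e f g h where B: "B = mk e f g h" using mk_eta by blast
  define C where "C = matrix_inv B"
  have C: "C = mk h (-f) (-g) e" unfolding C_def B using dB unfolding B by (simp add: inv_mk)
  have nsA: "\<forall>k. A \<noteq> mat k"
  proof
    fix k show "A \<noteq> mat k" using nc unfolding mk_mat A B by (auto simp: algebra_simps)
  qed
  have nsC: "\<forall>k. C \<noteq> mat k"
  proof
    fix k show "C \<noteq> mat k" using nc unfolding mk_mat A B C by (auto simp: algebra_simps)
  qed
  have dC: "det C = 1" using dB unfolding B C by (simp add: algebra_simps)
  have tC: "trace A = trace C" using tAB unfolding B C by simp
  have "\<not> coherently_oriented A C" using wo unfolding well_oriented_def C_def by simp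
  then have "trace (A ** C) < 2" using coh_of_tr[OF dA dC tC t2 nsA nsC] by linarith
  moreover have "trace (A ** B) + trace (A ** C) = trace A * trace B" unfolding A B C
    by (simp add: algebra_simps)
  ultimately show ?thesis using tAB by (simp add: power2_eq_square)
qed

fun cf :: "real \<Rightarrow> real \<Rightarrow> letter list \<Rightarrow> real \<times> real \<times> real \<times> real" where
  "cf t x [] = (1,0,0,0)"
| "cf t x (La # w) = (case cf t x w of (p0,p1,p2,p3) \<Rightarrow> (-p1, p0 + t*p1, -p3, p2 + t*p3))"
| "cf t x (Lb # w) = (case cf t x w of (p0,p1,p2,p3) \<Rightarrow>
      (p1*(x - t*t) - p2 - t*p3, t*p1 + p3, p0 + t*p1 + t*p2 + x*p3, -p1))"

definition comb :: "real^2^2 \<Rightarrow> real^2^2 \<Rightarrow> real \<times> real \<times> real \<times> real \<Rightarrow> real^2^2" where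
  "comb A B p = (case p of (p0,p1,p2,p3) \<Rightarrow> p0 *\<^sub>R mat 1 + p1 *\<^sub>R A + p2 *\<^sub>R B + p3 *\<^sub>R (A ** B))"

lemma phi_Nil[simp]: "phi A B [] = mat 1" by (simp add: phi_def)
lemma phi_Cons[simp]: "phi A B (l # w) = (case l of La \<Rightarrow> A | Lb \<Rightarrow> B) ** phi A B w"
  by (simp add: phi_def)

lemma stepA:
  assumes "a1*a4 - a2*a3 = 1"
  shows "mk a1 a2 a3 a4 ** comb (mk a1 a2 a3 a4) (mk b1 b2 b3 b4) (p0,p1,p2,p3) =
    comb (mk a1 a2 a3 a4) (mk b1 b2 b3 b4) (-p1, p0 + (a1+a4)*p1, -p3, p2 + (a1+a4)*p3)"
  using assms unfolding comb_def mk_one by simp algebra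

lemma stepB:
  fixes a1 a2 a3 a4 b1 b2 b3 b4 p0 p1 p2 p3 :: real
  assumes "b1*b4 - b2*b3 = 1" "b1 + b4 = a1 + a4"
  defines "t \<equiv> a1 + a4" and "x \<equiv> a1*b1 + a2*b3 + a3*b2 + a4*b4"
  shows "mk b1 b2 b3 b4 ** comb (mk a1 a2 a3 a4) (mk b1 b2 b3 b4) (p0,p1,p2,p3) =
    comb (mk a1 a2 a3 a4) (mk b1 b2 b3 b4) (p1*(x - t*t) - p2 - t*p3, t*p1 + p3, p0 + t*p1 + t*p2 + x*p3, -p1)"
  using assms unfolding comb_def mk_one by simp algebra

lemma phi_cf:
  fixes A B :: "real^2^2"
  assumes dA: "det A = 1" and dB: "det B = 1" and tAB: "trace A = trace B"
  shows "phi A B w = comb A B (cf (trace A) (trace (A ** B)) w)"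
proof (induction w)
  case Nil
  then show ?case by (simp add: comb_def)
next
  case (Cons l w)
  obtain a1 a2 a3 a4 where A: "A = mk a1 a2 a3 a4" using mk_eta by blast
  obtain b1 b2 b3 b4 where B: "B = mk b1 b2 b3 b4" using mk_eta by blast
  obtain p0 p1 p2 p3 where p: "cf (trace A) (trace (A ** B)) w = (p0,p1,p2,p3)" by (metis prod_cases4)
  have h: "a1*a4 - a2*a3 = 1" "b1*b4 - b2*b3 = 1" "b1 + b4 = a1 + a4" using dA dB tAB unfolding A B by auto
  have tr: "trace A = a1 + a4" "trace (A ** B) = a1*b1 + a2*b3 + a3*b2 + a4*b4" unfolding A B by simp_all
  show ?case
  proof (cases l)
    case La
    show ?thesis unfolding La phi_Cons Cons.IH unfolding p
      using stepA[OF h(1), of b1 b2 b3 b4 p0 p1 p2 p3] unfolding A B tr[unfolded A B] by (simp add: p[unfolded A B tr[unfolded A B]])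
  next
    case Lb
    show ?thesis unfolding Lb phi_Cons Cons.IH unfolding p
      using stepB[of b1 b4 b2 b3 a1 a4 a2 a3 p0 p1 p2 p3, OF h(2,3)] unfolding A B tr[unfolded A B] by (simp add: p[unfolded A B tr[unfolded A B]])
  qed
qed

definition trf :: "real \<Rightarrow> real \<Rightarrow> letter list \<Rightarrow> real" where
  "trf t x w = (case cf t x w of (p0,p1,p2,p3) \<Rightarrow> 2*p0 + t*p1 + t*p2 + x*p3)"

lemma wtr_trf:
  fixes A B :: "real^2^2"
  assumes dA: "det A = 1" and dB: "det B = 1" and tAB: "trace A = trace B"
  shows "wtr A B w = trf (trace A) (trace (A ** B)) w"
proof -
  obtain p0 p1 p2 p3 where p: "cf (trace A) (trace (A ** B)) w = (p0,p1,p2,p3)" by (metis prod_cases4)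
  obtain a1 a2 a3 a4 where A: "A = mk a1 a2 a3 a4" using mk_eta by blast
  obtain b1 b2 b3 b4 where B: "B = mk b1 b2 b3 b4" using mk_eta by blast
  have "wtr A B w = trace (comb A B (p0,p1,p2,p3))" unfolding wtr_def phi_cf[OF assms] p ..
  also have "\<dots> = 2*p0 + trace A*p1 + trace B*p2 + trace (A**B)*p3"
    unfolding comb_def A B mk_one by (simp add: algebra_simps)
  finally show ?thesis unfolding trf_def p using tAB by simp
qed

definition sqn :: "real^2 \<Rightarrow> real" where "sqn v = v$1 * v$1 + v$2 * v$2"
definition bnd :: "real^2^2 \<Rightarrow> real \<Rightarrow> bool" where "bnd X c \<longleftrightarrow> (\<forall>v. sqn (X *v v) \<le> c * sqn v)"
definition Fr :: "real^2^2 \<Rightarrow> real" where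
  "Fr X = X$1$1 * X$1$1 + X$1$2 * X$1$2 + X$2$1 * X$2$1 + X$2$2 * X$2$2"
definition mu :: "real \<Rightarrow> real" where "mu T = (T + sqrt (T * T - 4)) / 2"

lemma sqn_vec[simp]: "sqn (vector [p, q]) = p * p + q * q" by (simp add: sqn_def)
lemma Fr_mk[simp]: "Fr (mk a b c d) = a * a + b * b + c * c + d * d" by (simp add: Fr_def)
lemma sqn_nonneg: "sqn v \<ge> 0" by (simp add: sqn_def)

lemma Fr_ge2: assumes "det X = 1" shows "Fr X \<ge> 2"
proof -
  obtain a b c d where X: "X = mk a b c d" using mk_eta by blast
  have "a * d - b * c = 1" using assms unfolding X by simp
  moreover have "(a - d) * (a - d) + (b + c) * (b + c) \<ge> 0" by simp
  ultimately show ?thesis unfolding X by (simp add: algebra_simps)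
qed

lemma mu_facts: assumes "T \<ge> 2"
  shows "mu T \<ge> 1" "mu T * mu T - T * mu T + 1 = 0" "mu T > 0" "mu T + 1 / mu T = T"
    "sqrt (T * T - 4) * sqrt (T * T - 4) = T * T - 4" "sqrt (T * T - 4) \<ge> 0"
proof -
  have h: "T * T - 4 \<ge> 0" using assms mult_mono[OF assms assms] by linarith
  define r where "r = sqrt (T * T - 4)"
  have r: "r * r = T * T - 4" "r \<ge> 0" unfolding r_def using h by (simp_all add: real_sqrt_mult_self[symmetric] del: real_sqrt_mult_self) (metis h real_sqrt_mult_self real_sqrt_abs abs_of_nonneg real_sqrt_mult)
  show "sqrt (T * T - 4) * sqrt (T * T - 4) = T * T - 4" "sqrt (T * T - 4) \<ge> 0" using r unfolding r_def by auto
  have m: "mu T = (T + r)/2" unfolding mu_def r_def ..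
  show "mu T \<ge> 1" unfolding m using assms r by simp
  show e: "mu T * mu T - T * mu T + 1 = 0" unfolding m
  proof -
    have "(T + r) / 2 * ((T + r) / 2) - T * ((T + r) / 2) + 1 = (r * r - T * T + 4)/4" by (simp add: field_simps)
    then show "(T + r) / 2 * ((T + r) / 2) - T * ((T + r) / 2) + 1 = 0" using r by simp
  qed
  show p: "mu T > 0" unfolding m using assms r by simp
  show "mu T + 1 / mu T = T"
  proof -
    have "mu T * (mu T + 1 / mu T) = mu T * T" using e p by (simp add: field_simps)
    then show ?thesis using p by simp
  qed
qed

lemma mu_char: assumes "z \<ge> (1::real)" shows "mu (z + 1/z) = z"
proof -
  have zp: "z > 0" using assms by simp
  have "(z + 1/z) * (z + 1/z) - 4 = (z - 1/z) * (z - 1/z)" using zp by (simp add: field_simps)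
  moreover have "z - 1/z \<ge> 0" using assms zp by (simp add: field_simps) (metis mult_mono one_le_mult_iff assms order_trans zero_le_one mult_1 power2_eq_square one_le_power)
  ultimately have "sqrt ((z + 1/z) * (z + 1/z) - 4) = z - 1/z" by simp
  then show ?thesis unfolding mu_def by simp
qed

lemma mu_mono: assumes "2 \<le> T" "T < T'" shows "mu T < mu T'"
proof -
  have "T * T \<le> T' * T'" using assms by (intro mult_mono) auto
  then have s: "sqrt (T * T - 4) \<le> sqrt (T' * T' - 4)" by simp
  have "T + sqrt (T * T - 4) < T' + sqrt (T' * T' - 4)" using assms(2) s by (rule add_less_le_mono)
  then show ?thesis unfolding mu_def by (simp add: divide_strict_right_mono)
qed

lemma quad_psd:
  fixes al ga q v1 v2 :: real
  assumes "al \<ge> 0" "ga \<ge> 0" "al * ga = q * q"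
  shows "al * (v1 * v1) - 2 * q * (v1 * v2) + ga * (v2 * v2) \<ge> 0"
proof (cases "al = 0")
  case True
  then have "q = 0" using assms by simp
  then show ?thesis using True assms by simp
next
  case False
  then have ap: "al > 0" using assms by simp
  have "al * (al * (v1 * v1) - 2 * q * (v1 * v2) + ga * (v2 * v2)) = (al * v1 - q * v2) * (al * v1 - q * v2)"
    using assms(3) by (simp add: algebra_simps)
  also have "\<dots> \<ge> 0" by simp
  finally show ?thesis using ap by (simp add: zero_le_mult_iff)
qed

lemma bnd_mu: assumes "det X = 1" shows "bnd X (mu (Fr X))"
  unfolding bnd_def
proof
  fix v :: "real^2"
  obtain a b c d where X: "X = mk a b c d" using mk_eta by blast
  obtain v1 v2 where v: "v = vector [v1, v2]" by (metis vec_eta)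
  define p where "p = a * a + c * c"
  define q where "q = a * b + c * d"
  define r where "r = b * b + d * d"
  have det: "a * d - b * c = 1" using assms unfolding X by simp
  have F: "Fr X = p + r" unfolding X p_def r_def by simp
  have pr: "p * r - q * q = 1"
  proof -
    have "p * r - q * q = (a * d - b * c) * (a * d - b * c)" unfolding p_def q_def r_def by (simp add: algebra_simps)
    then show ?thesis using det by simp
  qed
  have F2: "Fr X \<ge> 2" using Fr_ge2[OF assms] .
  define S where "S = sqrt (Fr X * Fr X - 4)"
  have S: "S * S = Fr X * Fr X - 4" "S \<ge> 0" unfolding S_def using mu_facts(5,6)[OF F2] by auto
  have S2: "S * S = (p - r) * (p - r) + 4 * (q * q)" using S(1) pr unfolding F by (simp add: algebra_simps)
  have "(p - r) * (p - r) \<le> S * S" using S2 by simp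
  then have Sabs: "\<bar>p - r\<bar> \<le> S" using S(2) by (metis abs_le_square_iff abs_of_nonneg power2_eq_square)
  have m: "mu (Fr X) = (p + r + S)/2" unfolding mu_def S_def F ..
  have al: "mu (Fr X) - p \<ge> 0" unfolding m using Sabs by simp
  have ga: "mu (Fr X) - r \<ge> 0" unfolding m using Sabs by simp
  have prod: "(mu (Fr X) - p) * (mu (Fr X) - r) = q * q"
  proof -
    have "(mu (Fr X) - p) * (mu (Fr X) - r) = (S * S - (p - r) * (p - r))/4" unfolding m by (simp add: field_simps)
    then show ?thesis using S2 by simp
  qed
  have "(mu (Fr X) - p) * (v1 * v1) - 2 * q * (v1 * v2) + (mu (Fr X) - r) * (v2 * v2) \<ge> 0"
    by (rule quad_psd[OF al ga prod])
  moreover have "sqn (X *v v) = p * (v1 * v1) + 2 * q * (v1 * v2) + r * (v2 * v2)" unfolding X v p_def q_def r_def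
    by (simp add: algebra_simps)
  ultimately show "sqn (X *v v) \<le> mu (Fr X) * sqn v" unfolding v by (simp add: algebra_simps)
qed

lemma bnd_Fr: assumes "det X = 1" "bnd X c" shows "1 \<le> c" "Fr X \<le> c + 1/c"
proof -
  obtain a b cc d where X: "X = mk a b cc d" using mk_eta by blast
  define p where "p = a * a + cc * cc"
  define q where "q = a * b + cc * d"
  define r where "r = b * b + d * d"
  have det: "a * d - b * cc = 1" using assms unfolding X by simp
  have F: "Fr X = p + r" unfolding X p_def r_def by simp
  have pr: "p * r - q * q = 1"
  proof -
    have "p * r - q * q = (a * d - b * cc) * (a * d - b * cc)" unfolding p_def q_def r_def by (simp add: algebra_simps)
    then show ?thesis using det by simp
  qed
  have Q: "(c - p) * (v1 * v1) - 2 * q * (v1 * v2) + (c - r) * (v2 * v2) \<ge> 0" for v1 v2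
  proof -
    have "sqn (X *v vector [v1, v2]) \<le> c * sqn (vector [v1, v2])" using assms(2) unfolding bnd_def by blast
    moreover have "sqn (X *v vector [v1, v2]) = p * (v1 * v1) + 2 * q * (v1 * v2) + r * (v2 * v2)" unfolding X p_def q_def r_def
      by (simp add: algebra_simps)
    ultimately show ?thesis by (simp add: algebra_simps)
  qed
  have cp: "c - p \<ge> 0" using Q[of 1 0] by simp
  have cr: "c - r \<ge> 0" using Q[of 0 1] by simp
  have key: "(c - p) * (c - r) - q * q \<ge> 0"
  proof (cases "c - p > 0")
    case True
    have "(c - p) * ((c - p) * (c - r) - q * q) = (c - p) * (q * q) - 2 * q * (q * (c - p)) + (c - r) * ((c - p) * (c - p))"
      by (simp add: algebra_simps)
    also have "\<dots> \<ge> 0" using Q[of q "c - p"] .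
    finally show ?thesis using True by (simp add: zero_le_mult_iff)
  next
    case F1: False
    show ?thesis
    proof (cases "c - r > 0")
      case True
      have "(c - r) * ((c - p) * (c - r) - q * q) = (c - p) * ((c - r) * (c - r)) - 2 * q * ((c - r) * q) + (c - r) * (q * q)"
        by (simp add: algebra_simps)
      also have "\<dots> \<ge> 0" using Q[of "c - r" q] .
      finally show ?thesis using True by (simp add: zero_le_mult_iff)
    next
      case False
      then have "c - p = 0" "c - r = 0" using F1 cp cr by auto
      then have "- 2 * q * (q) \<ge> 0" using Q[of 1 q] by simp
      then have "q = 0" by (simp add: mult_le_0_iff) (smt (verit) zero_le_square)
      then show ?thesis using \<open>c - p = 0\<close> by simp
    qed
  qed
  have F2: "Fr X \<ge> 2" using Fr_ge2[OF assms(1)] .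
  have c1: "c \<ge> (p + r)/2" using cp cr by simp
  then show "1 \<le> c" using F2 F by simp
  then have cpos: "c > 0" by simp
  have "c * c - Fr X * c + 1 \<ge> 0" using key pr unfolding F by (simp add: algebra_simps)
  moreover have "c * (c + 1/c - Fr X) = c * c - Fr X * c + 1" using cpos by (simp add: field_simps)
  ultimately have "c * (c + 1/c - Fr X) \<ge> 0" by linarith
  then show "Fr X \<le> c + 1/c" using cpos by (simp add: zero_le_mult_iff)
qed

lemma tr_sq: assumes "det X = 1" shows "trace X * trace X \<le> Fr X + 2"
proof -
  obtain a b c d where X: "X = mk a b c d" using mk_eta by blast
  have "a * d - b * c = 1" using assms unfolding X by simp
  moreover have "(b - c) * (b - c) \<ge> 0" by simp
  ultimately show ?thesis unfolding X by (simp add: algebra_simps)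
qed

lemma bnd_mult: assumes "bnd X c1" "bnd Y c2" "c1 \<ge> 0" shows "bnd (X ** Y) (c1 * c2)"
  unfolding bnd_def
proof
  fix v :: "real^2"
  have "sqn ((X ** Y) *v v) = sqn (X *v (Y *v v))" by (simp add: matrix_vector_mul_assoc)
  also have "\<dots> \<le> c1 * sqn (Y *v v)" using assms(1) unfolding bnd_def by blast
  also have "\<dots> \<le> c1 * (c2 * sqn v)" using assms(2) unfolding bnd_def by (intro mult_left_mono assms(3)) auto
  finally show "sqn ((X ** Y) *v v) \<le> c1 * c2 * sqn v" by simp
qed

lemma bnd_one: "bnd (mat 1) 1" unfolding bnd_def by simp

lemma det_mult2: "det ((X::real^2^2) ** Y) = det X * det Y" by (rule det_mul)

lemma zz_mono: assumes "(1::real) \<le> c" "c \<le> D" shows "c + 1/c \<le> D + 1/D"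
proof -
  have "D + 1/D - (c + 1/c) = (D - c) * (1 - 1/(c * D))" using assms by (simp add: field_simps)
  moreover have "1/(c * D) \<le> 1" using assms by (simp add: field_simps) (metis mult_mono one_le_mult_iff order_trans zero_le_one mult_1)
  ultimately show ?thesis using assms by (smt (verit) mult_nonneg_nonneg)
qed

lemma zz_strict: assumes "(1::real) \<le> c" "c < D" shows "c + 1/c < D + 1/D"
proof -
  have "D + 1/D - (c + 1/c) = (D - c) * (1 - 1/(c * D))" using assms by (simp add: field_simps)
  moreover have "1/(c * D) < 1" using assms by (simp add: field_simps) (smt (verit) mult_less_cancel_left2 mult_le_cancel_left1)
  ultimately show ?thesis using assms by (smt (verit) mult_pos_pos)
qed

lemma phi_append: "phi A B (u @ v) = phi A B u ** phi A B v"
  by (induction u) (simp_all add: matrix_mul_assoc)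

lemma wpow_Suc: "wpow w (Suc n) = w @ wpow w n" by (simp add: wpow_def)
lemma wpow_0: "wpow w 0 = []" by (simp add: wpow_def)
lemma wpow_2: "wpow w 2 = w @ w" by (simp add: wpow_def numeral_2_eq_2)
lemma length_wpow: "length (wpow w n) = n * length w" by (induction n) (simp_all add: wpow_0 wpow_Suc)

fun flip :: "letter \<Rightarrow> letter" where "flip La = Lb" | "flip Lb = La"
lemma neq_flip: "x \<noteq> y \<Longrightarrow> y = flip x" by (cases x; cases y) auto
lemma flip_flip[simp]: "flip (flip x) = x" by (cases x) auto
lemma flip_neq[simp]: "flip x \<noteq> x" by (cases x) auto

lemma alt_nth:
  assumes alt: "\<forall>i. Suc i < length ys \<longrightarrow> ys!i \<noteq> ys!(Suc i)"
  shows "i < length ys \<Longrightarrow> ys!i = (if even i then ys!0 else flip (ys!0))"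
proof (induction i)
  case 0
  then show ?case by simp
next
  case (Suc i)
  then have "ys!(Suc i) = flip (ys!i)" using alt neq_flip by (metis Suc_lessD)
  then show ?case using Suc by auto
qed

lemma wpow2_nth: "j < 2*k \<Longrightarrow> wpow [c,d] k ! j = (if even j then c else d)"
proof (induction k arbitrary: j)
  case 0
  then show ?case by simp
next
  case (Suc k)
  show ?case
  proof (cases j)
    case 0
    then show ?thesis by (simp add: wpow_Suc)
  next
    case (Suc j1)
    show ?thesis
    proof (cases j1)
      case 0
      then show ?thesis using Suc by (simp add: wpow_Suc)
    next
      case (Suc j2)
      have "j2 < 2*k" using Suc.prems \<open>j = Suc j1\<close> Suc by simp
      then show ?thesis using Suc.IH[of j2] \<open>j = Suc j1\<close> Suc by (simp add: wpow_Suc)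
    qed
  qed
qed

lemma alt_form:
  assumes ne: "w \<noteq> []" and alt: "\<forall>i. Suc i < length (w @ w) \<longrightarrow> (w @ w)!i \<noteq> (w @ w)!(Suc i)"
  shows "\<exists>k. k \<ge> 1 \<and> (w = wpow [La,Lb] k \<or> w = wpow [Lb,La] k)"
proof -
  define n where "n = length w"
  define ys where "ys = w @ w"
  have n0: "n > 0" using ne unfolding n_def by simp
  have y0: "ys!0 = w!0" unfolding ys_def using n0 n_def by (simp add: nth_append)
  have yn: "ys!n = w!0" unfolding ys_def n_def by (simp add: nth_append)
  have an: "ys!n = (if even n then ys!0 else flip (ys!0))"
    using alt_nth[of ys n] alt n0 unfolding ys_def n_def by simp
  have ev: "even n" using an yn y0 by (metis flip_neq)
  define k where "k = n div 2"
  have nk: "n = 2*k" using ev unfolding k_def by simp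
  have k1: "k \<ge> 1" using n0 nk by simp
  define c where "c = w!0"
  have weq: "w = wpow [c, flip c] k"
  proof (rule nth_equalityI)
    show "length w = length (wpow [c, flip c] k)" using nk unfolding n_def by (simp add: length_wpow)
  next
    fix j assume j: "j < length w"
    have "w!j = ys!j" unfolding ys_def using j by (simp add: nth_append)
    also have "\<dots> = (if even j then c else flip c)" using alt_nth[of ys j] alt j y0 unfolding ys_def c_def by simp
    also have "\<dots> = wpow [c, flip c] k ! j" using wpow2_nth[of j k c "flip c"] j nk unfolding n_def by simp
    finally show "w!j = wpow [c, flip c] k ! j" .
  qed
  show ?thesis
  proof (cases c)
    case La
    then show ?thesis using weq k1 by auto
  next
    case Lb
    then show ?thesis using weq k1 by auto
  qed
qed

lemma split_adj:
  assumes "Suc i < length ys"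
  shows "ys = take i ys @ [ys!i, ys!(Suc i)] @ drop (Suc (Suc i)) ys"
proof -
  have "drop i ys = ys!i # drop (Suc i) ys" using assms by (simp add: Cons_nth_drop_Suc)
  also have "drop (Suc i) ys = ys!(Suc i) # drop (Suc (Suc i)) ys" using assms by (simp add: Cons_nth_drop_Suc)
  finally have "drop i ys = [ys!i, ys!(Suc i)] @ drop (Suc (Suc i)) ys" by simp
  then show ?thesis by (metis append_take_drop_id)
qed

lemma sq_le_pos: "(x::real) * x \<le> y * y \<Longrightarrow> 0 \<le> y \<Longrightarrow> x \<le> y"
  by (metis abs_le_square_iff abs_of_nonneg abs_ge_self order_trans power2_eq_square)

lemma sq_less_pos: "(x::real) * x < y * y \<Longrightarrow> 0 \<le> y \<Longrightarrow> x < y"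
  by (metis abs_le_square_iff abs_of_nonneg abs_ge_self le_less_trans not_le power2_eq_square order_less_imp_le)

lemma det_phi: assumes "det A = 1" "det B = 1" shows "det (phi A B u) = 1"
proof (induction u)
  case Nil
  then show ?case by (simp add: mk_one)
next
  case (Cons l u)
  then show ?case using assms by (cases l) (simp_all add: det_mul)
qed

lemma ch: fixes Q P :: "real^2^2" assumes "det Q = 1"
  shows "Q ** (Q ** P) = trace Q *\<^sub>R (Q ** P) - P"
proof -
  obtain q1 q2 q3 q4 where Q: "Q = mk q1 q2 q3 q4" using mk_eta by blast
  obtain p1 p2 p3 p4 where P: "P = mk p1 p2 p3 p4" using mk_eta by blast
  have h: "q1 * q4 - q2 * q3 = 1" using assms unfolding Q by simp
  have m: "- P = mk (-p1) (-p2) (-p3) (-p4)" unfolding P by simp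
  show ?thesis unfolding Q P diff_conv_add_uminus m using h by simp algebra
qed

locale model =
  fixes a b :: real
  assumes apos: "a > 0" and bnz: "b \<noteq> 0"
begin

abbreviation "M \<equiv> mk a b 0 (1/a)"
abbreviation "N \<equiv> mk a 0 b (1/a)"
definition "xx = a * a + b * b + 1/a * (1/a)"
definition "L = mu xx"
definition "c2 = mu (Fr (M ** M))"

lemma anz: "a \<noteq> 0" using apos by simp
lemma dM: "det M = 1" using anz by simp
lemma dN: "det N = 1" using anz by simp
lemma FrM: "Fr M = xx" unfolding xx_def by simp
lemma FrN: "Fr N = xx" unfolding xx_def by simp
lemma xx2: "xx \<ge> 2" using Fr_ge2[OF dM] FrM by simp
lemma L1: "L \<ge> 1" unfolding L_def using mu_facts(1)[OF xx2] .
lemma Lx: "L + 1/L = xx" unfolding L_def using mu_facts(4)[OF xx2] .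
lemma Lpos: "L > 0" using L1 by simp

lemma bM: "bnd M L" using bnd_mu[OF dM] FrM unfolding L_def by simp
lemma bN: "bnd N L" using bnd_mu[OF dN] FrN unfolding L_def by simp

lemma FrNN: "Fr (N ** N) = Fr (M ** M)" by (simp add: algebra_simps)

lemma bMM: "bnd (M ** M) c2" unfolding c2_def by (rule bnd_mu) (simp add: anz)
lemma bNN: "bnd (N ** N) c2" unfolding c2_def FrNN[symmetric] by (rule bnd_mu) (simp add: anz)

lemma c2_less: "c2 < L * L"
proof -
  have d: "det (M ** M) = 1" by (simp add: anz)
  have F2: "Fr (M ** M) \<ge> 2" using Fr_ge2[OF d] .
  define ia where "ia = 1/a"
  have aia: "a * ia = 1" unfolding ia_def using anz by simp
  have e1: "Fr (M ** M) = a*a*(a*a) + (a*b + b*ia)*(a*b + b*ia) + ia*ia*(ia*ia)"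
    unfolding ia_def by (simp add: algebra_simps)
  have e2: "xx = a*a + b*b + ia*ia" unfolding xx_def ia_def by simp
  have "xx * xx - 2 - Fr (M ** M) = (b*b)*((a - ia)*(a - ia)) + (b*b)*(b*b)"
  proof -
    have "xx * xx - 2 - Fr (M ** M) = (b*b)*((a - ia)*(a - ia)) + (b*b)*(b*b) + 2*(a*ia)*(a*ia) - 2"
      unfolding e1 e2 by (simp add: algebra_simps)
    then show ?thesis using aia by simp
  qed
  moreover have "(b*b)*(b*b) > 0" using bnz by (metis mult_pos_pos not_real_square_gt_zero)
  moreover have "(b*b)*((a - ia)*(a - ia)) \<ge> 0" by simp
  ultimately have lt: "Fr (M ** M) < xx * xx - 2" by linarith
  have LL: "xx * xx - 2 = L * L + 1 / (L * L)"
  proof -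
    have "xx * xx - 2 = (L + 1/L) * (L + 1/L) - 2" using Lx by simp
    also have "\<dots> = L * L + 1 / (L * L)" using Lpos by (simp add: field_simps)
    finally show ?thesis .
  qed
  have LL1: "L * L \<ge> 1" using L1 by (metis mult_mono one_le_mult_iff order_trans zero_le_one mult_1 less_imp_le Lpos)
  have "c2 < mu (xx * xx - 2)" unfolding c2_def by (rule mu_mono[OF F2 lt])
  also have "\<dots> = L * L" unfolding LL by (rule mu_char[OF LL1])
  finally show ?thesis .
qed

lemma letter_bnd: "bnd (case l of La \<Rightarrow> M | Lb \<Rightarrow> N) L" by (cases l) (simp_all add: bM bN)

lemma word_bnd: "bnd (phi M N u) (L ^ length u)"
proof (induction u)
  case Nil
  then show ?case by (simp add: bnd_one)
next
  case (Cons l u)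
  show ?case using bnd_mult[OF letter_bnd Cons.IH] Lpos by simp
qed

lemma pair_bnd: "bnd (phi M N [l, l]) c2"
  using bMM bNN by (cases l) (simp_all add: matrix_mul_rid)

lemma c2_pos: "c2 \<ge> 0" unfolding c2_def by (rule less_imp_le, rule mu_facts(3), rule Fr_ge2) (simp add: anz)

lemma strict_bnd: assumes "u = p @ [l, l] @ s" shows "\<exists>c. bnd (phi M N u) c \<and> c < L ^ length u"
proof -
  have "phi M N u = phi M N p ** (phi M N [l,l] ** phi M N s)" unfolding assms phi_append ..
  moreover have "bnd (phi M N p ** (phi M N [l,l] ** phi M N s)) (L ^ length p * (c2 * L ^ length s))"
    by (intro bnd_mult word_bnd pair_bnd c2_pos) (use Lpos in simp)
  moreover have "L ^ length p * (c2 * L ^ length s) < L ^ length u"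
  proof -
    have "L ^ length u = L ^ length p * ((L * L) * L ^ length s)" unfolding assms by (simp add: power_add)
    moreover have "c2 * L ^ length s < (L * L) * L ^ length s" using c2_less Lpos by simp
    ultimately show ?thesis using Lpos by simp
  qed
  ultimately show ?thesis by auto
qed

lemma trace_wpow: "trace (phi M N (wpow [La,Lb] n)) = L ^ n + (1/L) ^ n"
proof -
  define Q where "Q = M ** N"
  have PS: "phi M N (wpow [La,Lb] (Suc n)) = Q ** phi M N (wpow [La,Lb] n)" for n
    unfolding wpow_Suc phi_append Q_def by (simp add: matrix_mul_rid)
  have trQ: "trace Q = xx" unfolding Q_def xx_def by simp
  have dQ: "det Q = 1" unfolding Q_def det_mul dM dN by simp
  have QQ: "Q ** (Q ** P) = xx *\<^sub>R (Q ** P) - P" for P :: "real^2^2"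
    using ch[OF dQ, of P] trQ by simp
  have rec: "trace (phi M N (wpow [La,Lb] (Suc (Suc n)))) =
      xx * trace (phi M N (wpow [La,Lb] (Suc n))) - trace (phi M N (wpow [La,Lb] n))" for n
  proof -
    obtain p1 p2 p3 p4 where P: "Q ** phi M N (wpow [La,Lb] n) = mk p1 p2 p3 p4" using mk_eta by blast
    obtain q1 q2 q3 q4 where P2: "phi M N (wpow [La,Lb] n) = mk q1 q2 q3 q4" using mk_eta by blast
    have "phi M N (wpow [La,Lb] (Suc (Suc n))) = xx *\<^sub>R (Q ** phi M N (wpow [La,Lb] n)) - phi M N (wpow [La,Lb] n)"
      unfolding PS QQ ..
    then show ?thesis unfolding PS P P2 by (simp add: trace_def sum_2 mat_eq2 algebra_simps)
  qed
  have g: "L ^ (Suc (Suc n)) + (1/L) ^ (Suc (Suc n)) = xx * (L ^ Suc n + (1/L) ^ Suc n) - (L ^ n + (1/L) ^ n)" for n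
  proof -
    have "xx * (L ^ Suc n + (1/L) ^ Suc n) = (L + 1/L) * (L ^ Suc n + (1/L) ^ Suc n)" using Lx by simp
    also have "\<dots> = L ^ (Suc (Suc n)) + (1/L) ^ (Suc (Suc n)) + (L ^ n + (1/L) ^ n)"
      using Lpos by (simp add: field_simps)
    finally show ?thesis by simp
  qed
  have "trace (phi M N (wpow [La,Lb] n)) = L ^ n + (1/L) ^ n \<and>
        trace (phi M N (wpow [La,Lb] (Suc n))) = L ^ (Suc n) + (1/L) ^ (Suc n)"
  proof (induction n)
    case 0
    have "trace (phi M N (wpow [La,Lb] (Suc 0))) = xx" unfolding PS wpow_0 Q_def xx_def
      by (simp add: mk_one)
    then show ?case using Lx by (simp add: wpow_0 mk_one)
  next
    case (Suc n)
    then show ?case using rec[of n] g[of n] by simp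
  qed
  then show ?thesis by simp
qed

lemma main_ineq:
  assumes ne: "w \<noteq> []"
  shows "wtr M N (w @ w) \<le> wtr M N (wpow [La,Lb] (length w))"
    and "(\<exists>i. Suc i < length (w @ w) \<and> (w @ w)!i = (w @ w)!(Suc i)) \<Longrightarrow>
         wtr M N (w @ w) < wtr M N (wpow [La,Lb] (length w))"
proof -
  define n where "n = length w"
  define W where "W = phi M N (w @ w)"
  define G where "G = L ^ n + (1/L) ^ n"
  have dW: "det W = 1" unfolding W_def using det_phi[OF dM dN] .
  have lw: "length (w @ w) = 2 * n" unfolding n_def by simp
  have Gpos: "G \<ge> 0" unfolding G_def using Lpos by simp
  have tG: "wtr M N (wpow [La,Lb] (length w)) = G" unfolding wtr_def G_def n_def trace_wpow ..
  have e1: "L ^ (2*n) = L ^ n * L ^ n" by (simp add: mult_2 power_add)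
  have e2: "(1/L) ^ n * (1/L) ^ n = 1 / L ^ (2*n)" unfolding e1 by (simp add: power_one_over)
  have e3: "L ^ n * (1/L) ^ n = 1" using Lpos by (simp add: power_one_over)
  have "G * G = L ^ n * L ^ n + 2 * (L ^ n * (1/L) ^ n) + (1/L) ^ n * (1/L) ^ n"
    unfolding G_def by (simp add: algebra_simps)
  then have G2: "G * G = L ^ (2*n) + 1 / L ^ (2*n) + 2" unfolding e2 e3 e1 by simp
  have Ln1: "L ^ (2*n) \<ge> 1" using L1 by simp
  have core: "trace W * trace W \<le> c + 1/c + 2" if "bnd W c" for c
    using tr_sq[OF dW] bnd_Fr(2)[OF dW that] by linarith
  have bW: "bnd W (L ^ (2*n))" unfolding W_def using word_bnd[of "w @ w"] lw by simp
  have "trace W * trace W \<le> G * G"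
    using core[OF bW] G2 by linarith
  then have "trace W \<le> G" by (rule sq_le_pos[OF _ Gpos])
  then show "wtr M N (w @ w) \<le> wtr M N (wpow [La,Lb] (length w))"
    unfolding tG by (simp add: wtr_def W_def)
  assume "\<exists>i. Suc i < length (w @ w) \<and> (w @ w)!i = (w @ w)!(Suc i)"
  then obtain i where i: "Suc i < length (w @ w)" "(w @ w)!i = (w @ w)!(Suc i)" by blast
  have sp: "w @ w = take i (w @ w) @ [(w @ w)!i, (w @ w)!i] @ drop (Suc (Suc i)) (w @ w)"
    using split_adj[OF i(1)] i(2) by simp
  obtain c where c0: "bnd (phi M N (w @ w)) c" "c < L ^ length (w @ w)" using strict_bnd[OF sp] by blast
  have c: "bnd W c" "c < L ^ (2*n)" using c0 lw unfolding W_def by simp_all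
  have "c + 1/c < L ^ (2*n) + 1 / L ^ (2*n)" using zz_strict[OF bnd_Fr(1)[OF dW c(1)] c(2)] .
  then have "trace W * trace W < G * G" using core[OF c(1)] G2 by linarith
  then have "trace W < G" by (rule sq_less_pos[OF _ Gpos])
  then show "wtr M N (w @ w) < wtr M N (wpow [La,Lb] (length w))"
    unfolding tG by (simp add: wtr_def W_def)
qed

lemma lyndon_ab: "lyndon [La, Lb]"
proof -
  have "([La, Lb], rotate k [La, Lb]) \<in> lexord letter_less" if "0 < k \<and> k < length [La, Lb]" for k
  proof -
    have "k = 1" using that by simp
    then show ?thesis unfolding letter_less_def by simp
  qed
  then show ?thesis unfolding lyndon_def by blast
qed

lemma model_opt: "complete_optimal_set M N {[La, Lb]}"
  unfolding complete_optimal_set_def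
proof (rule conjI; (intro ballI allI impI)?)
  fix s assume "s \<in> {[La, Lb]}"
  then have s: "s = [La, Lb]" by simp
  have "maximal_word M N [La, Lb]"
    unfolding maximal_word_def wle_def
    using main_ineq(1) by (simp add: wpow_Suc wpow_0)
  then show "maximal_word M N s \<and> lyndon s" using s lyndon_ab by simp
next
  fix w assume mw: "maximal_word M N w"
  then have ne: "w \<noteq> []" and wl: "wle M N [La,Lb] w" unfolding maximal_word_def by auto
  have le: "wtr M N (wpow [La,Lb] (length w)) \<le> wtr M N (w @ w)"
    using wl unfolding wle_def by (simp add: wpow_Suc wpow_0)
  have alt: "\<forall>i. Suc i < length (w @ w) \<longrightarrow> (w @ w)!i \<noteq> (w @ w)!(Suc i)"
    using main_ineq(2)[OF ne] le by fastforce
  obtain k where k: "k \<ge> 1" "w = wpow [La,Lb] k \<or> w = wpow [Lb,La] k" using alt_form[OF ne alt] by blast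
  show "\<exists>s\<in>{[La, Lb]}. \<exists>k n. n \<ge> 1 \<and> w = wpow (rotate k s) n"
  proof (cases "w = wpow [La,Lb] k")
    case True
    then show ?thesis using k(1) by (intro bexI[of _ "[La,Lb]"] exI[of _ 0] exI[of _ k]) auto
  next
    case False
    then have "w = wpow [Lb,La] k" using k(2) by simp
    moreover have "rotate 1 [La, Lb] = [Lb, La]" by simp
    ultimately show ?thesis using k(1) by (intro bexI[of _ "[La,Lb]"] exI[of _ 1] exI[of _ k]) auto
  qed
qed

end

theorem theorem3p6:
  fixes A B :: "real^2^2"
  assumes "det A = 1" and "det B = 1"
    and "A ** B \<noteq> B ** A"
    and "trace A = trace B" and "trace A \<ge> 2"
    and "well_oriented A B"
  shows "complete_optimal_set A B {[La, Lb]}"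
proof -
  define t where "t = trace A"
  define x where "x = trace (A ** B)"
  have xt: "x > t^2 - 2" using wo_trace[OF assms] unfolding t_def x_def .
  have t2: "trace A \<ge> 2" using assms(5) .
  define a where "a = lam_plus A"
  have apos: "a > 0" using lam_facts(5)[OF t2] unfolding a_def .
  have "a * lam_minus A = 1" using lam_facts(3)[OF t2] unfolding a_def .
  then have ia: "1/a = lam_minus A" using apos by (simp add: field_simps)
  have "a + 1/a = lam_plus A + lam_minus A" using ia unfolding a_def by simp
  also have "\<dots> = t" unfolding lam_plus_def lam_minus_def t_def by (simp add: field_simps)
  finally have at: "a + 1/a = t" .
  define b where "b = sqrt (x - t^2 + 2)"
  have xp: "x - t^2 + 2 > 0" using xt by simp
  have bb: "b * b = x - t^2 + 2" unfolding b_def using xp by simp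
  have bpos: "b > 0" unfolding b_def using xp by simp
  have bnz: "b \<noteq> 0" using bpos by simp
  have anz: "a \<noteq> 0" using apos by simp
  let ?M = "mk a b 0 (1/a)" and ?N = "mk a 0 b (1/a)"
  have dM: "det ?M = 1" and dN: "det ?N = 1" using anz by simp_all
  have tM: "trace ?M = t" and tN: "trace ?N = t" using at by simp_all
  have "trace (?M ** ?N) = (a + 1/a) * (a + 1/a) - 2 * (a * (1/a)) + b * b" by (simp add: algebra_simps)
  also have "\<dots> = t * t - 2 + (x - t^2 + 2)" using at anz bb by simp
  also have "\<dots> = x" by (simp add: power2_eq_square)
  finally have tMN: "trace (?M ** ?N) = x" .
  have eq: "wtr A B = wtr ?M ?N"
  proof
    fix w
    have "wtr A B w = trf t x w" unfolding t_def x_def by (rule wtr_trf[OF assms(1,2,4)])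
    also have "\<dots> = wtr ?M ?N w" using wtr_trf[OF dM dN, of w] tM tN tMN by simp
    finally show "wtr A B w = wtr ?M ?N w" .
  qed
  have mo: "complete_optimal_set ?M ?N {[La, Lb]}"
    using model.model_opt[of a b] apos bnz by (simp add: model_def)
  show ?thesis using mo unfolding complete_optimal_set_def maximal_word_def wle_def eq .
qed

end
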